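(* Let $V$ be a finite-dimensional super vector space over a field of characteristic $0$, let $W\subseteq V$ be a graded subspace, $D=W^0=\{X\in\mathfrak{gl}(V):X(w)=0\ \forall w\in W\}$ (so that $D^0=W$), and let $\pi:V\to\mathfrak{gl}(V)$ be an even, super skew-symmetric linear map; write $\pi(x,y)=\pi(x)(y)$. Let $L=\{X+\pi(x)+x: X\in D,\ x\in D^0\}\subseteq\mathfrak{gl}(V)\oplus V$. Then $L$ is a Dirac structure if and only if: (1) $D$ is a Lie sub-superalgebra of $\mathfrak{gl}(V)$; (2) $\pi(\pi(x,y))-[\pi(x),\pi(y)]\in D$ for all $x,y\in D^0$; (3) $\pi(x,y)\in D^0$ for all $x,y\in D^0$.
   Context: $\mathfrak{gl}(V)$: linear endomorphisms of $V$ with natural $\mathbb{Z}_2$-grading and supercommutator $[A,B]=AB-(-1)^{|A||B|}BA$. $\mathcal{E}=\mathfrak{gl}(V)\oplus V$ graded by $\mathcal{E}_\alpha=\mathfrak{gl}(V)_\alpha\oplus V_\alpha$, homogeneous elements $A+x$ with $|A|=|x|$. Bracket: $[\![A+x,B+y]\!]=[A,B]+\tfrac12(Ay-(-1)^{|x||y|}Bx)$; $V$-valued pairing: $\langle A+x,B+y\rangle=\tfrac12(Ay+(-1)^{|x||y|}Bx)$. $F^\perp=\{e:\langle e,f\rangle=0\ \forall f\in F\}$. For $D\subseteq\mathfrak{gl}(V)$, $D^0=\{x\in V: X(x)=0\ \forall X\in D\}$. Super skew-symmetric: $\pi(x)(y)=-(-1)^{|x||y|}\pi(y)(x)$ for homogeneous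 $x,y$. A Dirac structure is a graded subspace $L\subseteq\mathcal{E}$ with $L=L^\perp$ and $[\![L,L]\!]\subseteq L$. *)

theory Defs
  imports "HOL-Analysis.Finite_Cartesian_Product"
begin

text \<open>A finite-dimensional super vector space V over a field 'a is modelled as
  'a^'n with a homogeneous basis indexed by the finite type 'n; the parity of the
  basis vector e_i is p i (True = odd). gl(V) is modelled as 'a^'n^'n.\<close>

definition vproj :: "('n \<Rightarrow> bool) \<Rightarrow> bool \<Rightarrow> 'a::zero^'n \<Rightarrow> 'a^'n" where
  "vproj p d x = (\<chi> i. if p i = d then x$i else 0)"

definition mproj :: "('n \<Rightarrow> bool) \<Rightarrow> bool \<Rightarrow> 'a::zero^'n^'n \<Rightarrow> 'a^'n^'n" where
  "mproj p d A = (\<chi> i j. if (p i \<noteq> p j) = d then A$i$j else 0)"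

definition hvec :: "('n \<Rightarrow> bool) \<Rightarrow> bool \<Rightarrow> 'a::zero^'n \<Rightarrow> bool" where
  "hvec p d x \<longleftrightarrow> vproj p d x = x"

definition hmat :: "('n \<Rightarrow> bool) \<Rightarrow> bool \<Rightarrow> 'a::zero^'n^'n \<Rightarrow> bool" where
  "hmat p d A \<longleftrightarrow> mproj p d A = A"

definition ssign :: "bool \<Rightarrow> bool \<Rightarrow> 'a::ring_1" where
  "ssign d e = (if d \<and> e then -1 else 1)"

definition mscale :: "'a::times \<Rightarrow> 'a^'n^'n \<Rightarrow> 'a^'n^'n" where
  "mscale c A = (\<chi> i j. c * A$i$j)"

text \<open>Supercommutator, extended bilinearly from homogeneous elements.\<close>
definition scomm :: "('n::finite \<Rightarrow> bool) \<Rightarrow> 'a::comm_ring_1^'n^'n \<Rightarrow> 'a^'n^'n \<Rightarrow> 'a^'n^'n" where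
  "scomm p A B = (\<Sum>d\<in>UNIV. \<Sum>e\<in>UNIV.
      mproj p d A ** mproj p e B - mscale (ssign d e) (mproj p e B ** mproj p d A))"

definition gsubspace_v :: "('n \<Rightarrow> bool) \<Rightarrow> ('a::field^'n) set \<Rightarrow> bool" where
  "gsubspace_v p W \<longleftrightarrow> 0 \<in> W \<and> (\<forall>x\<in>W. \<forall>y\<in>W. x + y \<in> W) \<and> (\<forall>c. \<forall>x\<in>W. c *s x \<in> W)
     \<and> (\<forall>d. \<forall>x\<in>W. vproj p d x \<in> W)"

definition gsubspace_m :: "('n::finite \<Rightarrow> bool) \<Rightarrow> ('a::field^'n^'n) set \<Rightarrow> bool" where
  "gsubspace_m p S \<longleftrightarrow> 0 \<in> S \<and> (\<forall>x\<in>S. \<forall>y\<in>S. x + y \<in> S) \<and> (\<forall>c. \<forall>x\<in>S. mscale c x \<in> S)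
     \<and> (\<forall>d. \<forall>x\<in>S. mproj p d x \<in> S)"

definition lie_subsuperalg :: "('n::finite \<Rightarrow> bool) \<Rightarrow> ('a::field^'n^'n) set \<Rightarrow> bool" where
  "lie_subsuperalg p S \<longleftrightarrow> gsubspace_m p S \<and> (\<forall>A\<in>S. \<forall>B\<in>S. scomm p A B \<in> S)"

type_synonym ('a, 'n) E = "('a^'n^'n) \<times> ('a^'n)"

definition gsubspace_E :: "('n::finite \<Rightarrow> bool) \<Rightarrow> ('a::field, 'n) E set \<Rightarrow> bool" where
  "gsubspace_E p S \<longleftrightarrow> (0, 0) \<in> S
     \<and> (\<forall>A x B y. (A, x) \<in> S \<longrightarrow> (B, y) \<in> S \<longrightarrow> (A + B, x + y) \<in> S)
     \<and> (\<forall>c A x. (A, x) \<in> S \<longrightarrow> (mscale c A, c *s x) \<in> S)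
     \<and> (\<forall>d A x. (A, x) \<in> S \<longrightarrow> (mproj p d A, vproj p d x) \<in> S)"

text \<open>Bracket and V-valued pairing on E, extended bilinearly from homogeneous
  elements; the degree-d component of A + x is (mproj p d A, vproj p d x).\<close>
definition ebracket :: "('n::finite \<Rightarrow> bool) \<Rightarrow> ('a::field, 'n) E \<Rightarrow> ('a, 'n) E \<Rightarrow> ('a, 'n) E" where
  "ebracket p e f = (case e of (A, x) \<Rightarrow> case f of (B, y) \<Rightarrow>
     (scomm p A B,
      \<Sum>d\<in>UNIV. \<Sum>d'\<in>UNIV. (1/2) *s (mproj p d A *v vproj p d' y
           - ssign d d' *s (mproj p d' B *v vproj p d x))))"

definition epair :: "('n::finite \<Rightarrow> bool) \<Rightarrow> ('a::field, 'n) E \<Rightarrow> ('a, 'n) E \<Rightarrow> 'a^'n" where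
  "epair p e f = (case e of (A, x) \<Rightarrow> case f of (B, y) \<Rightarrow>
     (\<Sum>d\<in>UNIV. \<Sum>d'\<in>UNIV. (1/2) *s (mproj p d A *v vproj p d' y
           + ssign d d' *s (mproj p d' B *v vproj p d x))))"

definition eperp :: "('n::finite \<Rightarrow> bool) \<Rightarrow> ('a::field, 'n) E set \<Rightarrow> ('a, 'n) E set" where
  "eperp p F = {e. \<forall>f\<in>F. epair p e f = 0}"

definition dirac :: "('n::finite \<Rightarrow> bool) \<Rightarrow> ('a::field, 'n) E set \<Rightarrow> bool" where
  "dirac p L \<longleftrightarrow> gsubspace_E p L \<and> L = eperp p L \<and> (\<forall>e\<in>L. \<forall>f\<in>L. ebracket p e f \<in> L)"

definition ann_mat :: "('a::semiring_1^'n::finite) set \<Rightarrow> ('a^'n^'n) set" where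
  "ann_mat W = {X. \<forall>w\<in>W. X *v w = 0}"

definition ann_vec :: "('a::semiring_1^'n::finite^'n) set \<Rightarrow> ('a^'n) set" where
  "ann_vec D = {x. \<forall>X\<in>D. X *v x = 0}"

end

theory Submission imports Defs begin

lemma matrix_add_rdistrib': "((A::'a::semiring_1^'n^'m) + B) ** C = A ** C + B ** C"
  by (vector matrix_matrix_mult_def sum.distrib distrib_right)

lemma vproj_add: "vproj p d (x + y) = vproj p d x + vproj p d (y::'a::comm_ring_1^'n)"
  by (simp add: vproj_def vec_eq_iff)
lemma vproj_diff: "vproj p d (x - y) = vproj p d x - vproj p d (y::'a::comm_ring_1^'n)"
  by (simp add: vproj_def vec_eq_iff)
lemma vproj_zero[simp]: "vproj p d 0 = (0::'a::comm_ring_1^'n)"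
  by (simp add: vproj_def vec_eq_iff)
lemma vproj_scale: "vproj p d (c *s x) = c *s vproj p d (x::'a::comm_ring_1^'n)"
  by (simp add: vproj_def vec_eq_iff)
lemma vproj_split: "vproj p True x + vproj p False x = (x::'a::comm_ring_1^'n)"
  by (simp add: vproj_def vec_eq_iff)
lemma vproj_vproj: "vproj p c (vproj p d x) = (if c = d then vproj p d x else (0::'a::comm_ring_1^'n))"
  by (simp add: vproj_def vec_eq_iff)
lemma mproj_add: "mproj p d (A + B) = mproj p d A + mproj p d (B::'a::comm_ring_1^'n^'n)"
  by (simp add: mproj_def vec_eq_iff)
lemma mproj_diff: "mproj p d (A - B) = mproj p d A - mproj p d (B::'a::comm_ring_1^'n^'n)"
  by (simp add: mproj_def vec_eq_iff)
lemma mproj_zero[simp]: "mproj p d 0 = (0::'a::comm_ring_1^'n^'n)"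
  by (simp add: mproj_def vec_eq_iff)
lemma mproj_scale: "mproj p d (mscale c A) = mscale c (mproj p d (A::'a::comm_ring_1^'n^'n))"
  by (simp add: mproj_def mscale_def vec_eq_iff)
lemma mproj_split: "mproj p True A + mproj p False A = (A::'a::comm_ring_1^'n^'n)"
  by (simp add: mproj_def vec_eq_iff)
lemma mproj_mproj: "mproj p c (mproj p d A) = (if c = d then mproj p d A else (0::'a::comm_ring_1^'n^'n))"
  by (simp add: mproj_def vec_eq_iff)
lemma mscale_add: "mscale c (A + B) = mscale c A + mscale c (B::'a::comm_ring_1^'n^'n)"
  by (simp add: mscale_def vec_eq_iff algebra_simps)
lemma mscale_mv: "mscale c A *v x = c *s (A *v (x::'a::comm_ring_1^'n::finite))"
  by (simp add: mscale_def vec_eq_iff matrix_vector_mult_def sum_distrib_left algebra_simps)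
lemma mscale_mm_l: "mscale c A ** B = mscale c (A ** (B::'a::comm_ring_1^'n::finite^'n))"
  by (simp add: mscale_def vec_eq_iff matrix_matrix_mult_def sum_distrib_left algebra_simps)
lemma mscale_mm_r: "A ** mscale c B = mscale c (A ** (B::'a::comm_ring_1^'n::finite^'n))"
  by (simp add: mscale_def vec_eq_iff matrix_matrix_mult_def sum_distrib_left algebra_simps)

lemma L1: "mproj p d A *v vproj p e x = vproj p (d \<noteq> e) (A *v vproj p e (x::'a::comm_ring_1^'n::finite))"
proof (rule vec_eq_iff[THEN iffD2], rule allI)
  fix i
  have "(mproj p d A *v vproj p e x)$i = (\<Sum>j\<in>UNIV. if p i = (d\<noteq>e) then A$i$j * (if p j = e then x$j else 0) else 0)"
    unfolding matrix_vector_mult_def vproj_def mproj_def by (auto intro!: sum.cong)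
  also have "\<dots> = (vproj p (d \<noteq> e) (A *v vproj p e x))$i"
    unfolding matrix_vector_mult_def vproj_def mproj_def by (cases "p i = (d\<noteq>e)") auto
  finally show "(mproj p d A *v vproj p e x)$i = (vproj p (d \<noteq> e) (A *v vproj p e x))$i" .
qed

lemma L2: "vproj p c (mproj p d A *v x) = mproj p d A *v vproj p (c \<noteq> d) (x::'a::comm_ring_1^'n::finite)"
proof (rule vec_eq_iff[THEN iffD2], rule allI)
  fix i
  have "(mproj p d A *v vproj p (c \<noteq> d) x)$i = (\<Sum>j\<in>UNIV. if p i = c then (if (p i \<noteq> p j) = d then A$i$j else 0) * x$j else 0)"
    unfolding matrix_vector_mult_def vproj_def mproj_def by (auto intro!: sum.cong)
  also have "\<dots> = (vproj p c (mproj p d A *v x))$i"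
    unfolding matrix_vector_mult_def vproj_def mproj_def by (cases "p i = c") auto
  finally show "(vproj p c (mproj p d A *v x))$i = (mproj p d A *v vproj p (c \<noteq> d) x)$i" by simp
qed


definition stw :: "('n::finite \<Rightarrow> bool) \<Rightarrow> 'a::comm_ring_1^'n^'n \<Rightarrow> 'a^'n \<Rightarrow> 'a^'n" where
  "stw p A x = (\<Sum>d\<in>UNIV. \<Sum>d'\<in>UNIV. ssign d d' *s (mproj p d' A *v vproj p d x))"

lemma mv_expand: "(A::'a::comm_ring_1^'n::finite^'n) *v y = (\<Sum>d\<in>UNIV. \<Sum>d'\<in>UNIV. mproj p d A *v vproj p d' y)"
proof -
  have "A *v y = (mproj p True A + mproj p False A) *v (vproj p True y + vproj p False y)"
    by (simp add: mproj_split vproj_split)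
  thus ?thesis by (simp add: UNIV_bool algebra_simps)
qed

lemma epair_eq: "epair p (A,x) (B,y) = (1/2::'a::field) *s (A *v y + stw p B x)"
  unfolding epair_def stw_def mv_expand[of A y p]
  by (simp add: UNIV_bool vector_add_ldistrib algebra_simps)

lemma ebracket_eq: "ebracket p (A,x) (B,y) = (scomm p A B, (1/2::'a::field) *s (A *v y - stw p B x))"
  unfolding ebracket_def stw_def mv_expand[of A y p]
  by (simp add: UNIV_bool vector_add_ldistrib vector_ssub_ldistrib algebra_simps)

lemma stw_add: "stw p (A + B) x = stw p A x + stw p B (x::'a::comm_ring_1^'n::finite)"
  unfolding stw_def by (simp add: UNIV_bool mproj_add vector_add_ldistrib algebra_simps)

lemma scomm_add_l: "scomm p (A + A') B = scomm p A B + scomm p A' (B::'a::comm_ring_1^'n::finite^'n)"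
  unfolding scomm_def by (simp add: UNIV_bool mproj_add matrix_add_rdistrib' matrix_add_ldistrib mscale_add algebra_simps)

lemma scomm_add_r: "scomm p A (B + B') = scomm p A B + scomm p A (B'::'a::comm_ring_1^'n::finite^'n)"
  unfolding scomm_def by (simp add: UNIV_bool mproj_add matrix_add_rdistrib' matrix_add_ldistrib mscale_add algebra_simps)

lemma stw_proj_zero:
  assumes "\<And>e. stw p (mproj p e X) y = 0"
  shows "X *v (y::'a::comm_ring_1^'n::finite) = 0"
proof -
  have F: "mproj p False X *v vproj p True y + mproj p False X *v vproj p False y = 0"
    using assms[of False] unfolding stw_def by (simp add: UNIV_bool mproj_mproj ssign_def add.commute)
  have T: "mproj p True X *v vproj p False y - mproj p True X *v vproj p True y = 0"
    using assms[of True] unfolding stw_def by (simp add: UNIV_bool mproj_mproj ssign_def vector_smult_lneg)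
  have "vproj p False (mproj p True X *v vproj p False y - mproj p True X *v vproj p True y) = 0"
    using T by simp
  hence T1: "mproj p True X *v vproj p True y = 0"
    by (simp add: vproj_diff L2 vproj_vproj)
  with T have T2: "mproj p True X *v vproj p False y = 0" by simp
  have "X *v y = (mproj p True X + mproj p False X) *v (vproj p True y + vproj p False y)"
    by (simp add: mproj_split vproj_split)
  also have "\<dots> = 0" using F T1 T2 by (simp add: algebra_simps)
  finally show ?thesis .
qed


lemma mv_smult: "(X::'a::comm_ring_1^'n::finite^'m) *v (c *s x) = c *s (X *v x)"
  by (simp add: vec_eq_iff matrix_vector_mult_def sum_distrib_left algebra_simps)

locale dsetup =
  fixes p :: "'n::finite \<Rightarrow> bool"
    and W :: "('a::field_char_0^'n) set"
    and \<pi> :: "'a^'n \<Rightarrow> 'a^'n^'n"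
    and D :: "('a^'n^'n) set"
    and L :: "('a, 'n) E set"
  assumes W_graded: "gsubspace_v p W"
    and \<pi>_add: "\<And>x y. \<pi> (x + y) = \<pi> x + \<pi> y"
    and \<pi>_scale: "\<And>c x. \<pi> (c *s x) = mscale c (\<pi> x)"
    and \<pi>_even: "\<And>d x. hvec p d x \<Longrightarrow> hmat p d (\<pi> x)"
    and \<pi>_skew: "\<And>d e x y. hvec p d x \<Longrightarrow> hvec p e y \<Longrightarrow>
                   \<pi> x *v y = - (ssign d e *s (\<pi> y *v x))"
    and D_def: "D = ann_mat W"
    and L_def: "L = {(X + \<pi> x, x) | X x. X \<in> D \<and> x \<in> ann_vec D}"
begin

lemma pi0[simp]: "\<pi> 0 = 0"
  using \<pi>_add[of 0 0] by simp

lemma pi_diff: "\<pi> (x - y) = \<pi> x - \<pi> y"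
  using \<pi>_add[of "x - y" y] by (simp add: algebra_simps)

lemma mproj_pi: "mproj p d (\<pi> x) = \<pi> (vproj p d x)"
proof -
  have h: "\<And>c e. mproj p e (\<pi> (vproj p c x)) = (if e = c then \<pi> (vproj p c x) else 0)"
  proof -
    fix c e
    have "hmat p c (\<pi> (vproj p c x))"
      by (rule \<pi>_even) (simp add: hvec_def vproj_vproj)
    hence eq: "mproj p c (\<pi> (vproj p c x)) = \<pi> (vproj p c x)" by (simp add: hmat_def)
    have "mproj p e (\<pi> (vproj p c x)) = mproj p e (mproj p c (\<pi> (vproj p c x)))" by (simp only: eq)
    also have "\<dots> = (if e = c then mproj p c (\<pi> (vproj p c x)) else 0)" by (rule mproj_mproj)
    also have "\<dots> = (if e = c then \<pi> (vproj p c x) else 0)" by (simp only: eq)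
    finally show "mproj p e (\<pi> (vproj p c x)) = (if e = c then \<pi> (vproj p c x) else 0)" .
  qed
  have "\<pi> x = \<pi> (vproj p True x) + \<pi> (vproj p False x)"
    by (simp add: \<pi>_add[symmetric] vproj_split)
  hence "mproj p d (\<pi> x) = mproj p d (\<pi> (vproj p True x)) + mproj p d (\<pi> (vproj p False x))"
    by (simp add: mproj_add)
  thus ?thesis using h by (cases d) auto
qed

lemma skew_h: "\<pi> (vproj p d x) *v vproj p e y = - (ssign d e *s (\<pi> (vproj p e y) *v vproj p d x))"
  by (rule \<pi>_skew) (simp_all add: hvec_def vproj_vproj)

lemma skew2: "ssign d e *s (\<pi> (vproj p e y) *v vproj p d x) = - (\<pi> (vproj p d x) *v vproj p e y)"
  using skew_h[of d x e y] by simp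

lemma stw_pi: "stw p (\<pi> y) x = - (\<pi> x *v y)"
proof -
  have "\<pi> x *v y = (\<Sum>d\<in>UNIV. \<Sum>d'\<in>UNIV. \<pi> (vproj p d x) *v vproj p d' y)"
    using mv_expand[of "\<pi> x" y p] by (simp add: mproj_pi)
  moreover have "stw p (\<pi> y) x = (\<Sum>d\<in>UNIV. \<Sum>d'\<in>UNIV. - (\<pi> (vproj p d x) *v vproj p d' y))"
    unfolding stw_def by (simp only: mproj_pi skew2)
  ultimately show ?thesis by (simp add: sum_negf)
qed

lemma memD: "X \<in> D \<longleftrightarrow> (\<forall>w\<in>W. X *v w = 0)"
  by (simp add: D_def ann_mat_def)

lemma W_vproj: "w \<in> W \<Longrightarrow> vproj p d w \<in> W"
  using W_graded by (simp add: gsubspace_v_def)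

lemma D_mproj: "X \<in> D \<Longrightarrow> mproj p d X \<in> D"
proof -
  assume X: "X \<in> D"
  { fix w assume w: "w \<in> W"
    have "mproj p d X *v w = mproj p d X *v (vproj p True w + vproj p False w)"
      by (simp add: vproj_split)
    also have "\<dots> = vproj p (d \<noteq> True) (X *v vproj p True w) + vproj p (d \<noteq> False) (X *v vproj p False w)"
      by (simp add: matrix_vector_right_distrib L1)
    also have "\<dots> = 0" using X w W_vproj memD by simp
    finally have "mproj p d X *v w = 0" . }
  thus ?thesis by (simp add: memD)
qed

lemma W_ann: "w \<in> W \<Longrightarrow> w \<in> ann_vec D"
  by (simp add: ann_vec_def memD)

lemma ann_vproj: "y \<in> ann_vec D \<Longrightarrow> vproj p e y \<in> ann_vec D"
proof -
  assume y: "y \<in> ann_vec D"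
  { fix X assume X: "X \<in> D"
    have z: "\<And>d. mproj p d X *v y = 0" using y D_mproj[OF X] by (simp add: ann_vec_def)
    have "\<And>d. mproj p d X *v vproj p e y = 0"
    proof -
      fix d
      have "mproj p d X *v vproj p e y = mproj p d X *v vproj p ((e \<noteq> d) \<noteq> d) y" by (cases d; cases e) auto
      also have "\<dots> = vproj p (e \<noteq> d) (mproj p d X *v y)" by (simp add: L2)
      also have "\<dots> = 0" using z by simp
      finally show "mproj p d X *v vproj p e y = 0" .
    qed
    hence "X *v vproj p e y = 0"
      by (metis (no_types) add.right_neutral matrix_vector_mult_add_rdistrib mproj_split)
  }
  thus ?thesis by (simp add: ann_vec_def)
qed

lemma D_add: "X \<in> D \<Longrightarrow> Y \<in> D \<Longrightarrow> X + Y \<in> D"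
  by (simp add: memD matrix_vector_mult_add_rdistrib)
lemma D_diff: "X \<in> D \<Longrightarrow> Y \<in> D \<Longrightarrow> X - Y \<in> D"
  by (simp add: memD matrix_vector_mult_diff_rdistrib)
lemma D_0: "0 \<in> D" by (simp add: memD)
lemma D_scale: "X \<in> D \<Longrightarrow> mscale c X \<in> D"
  by (simp add: memD mscale_mv)
lemma D_mul: "Y \<in> D \<Longrightarrow> M ** Y \<in> D"
  by (simp add: memD matrix_vector_mul_assoc[symmetric])
lemma D_minus: "X \<in> D \<Longrightarrow> - X \<in> D"
  using D_diff[OF D_0, of X] by (simp only: diff_0)

lemma A_add: "x \<in> ann_vec D \<Longrightarrow> y \<in> ann_vec D \<Longrightarrow> x + y \<in> ann_vec D"
  by (simp add: ann_vec_def matrix_vector_right_distrib)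
lemma A_scale: "x \<in> ann_vec D \<Longrightarrow> c *s x \<in> ann_vec D"
proof -
  assume x: "x \<in> ann_vec D"
  { fix X assume "X \<in> D"
    hence "X *v x = 0" using x by (simp add: ann_vec_def)
    hence "X *v (c *s x) = 0" by (simp only: mv_smult vector_smult_rzero) }
  thus ?thesis by (simp add: ann_vec_def)
qed
lemma A_0: "0 \<in> ann_vec D" by (simp add: ann_vec_def)

lemma stw_D: "X \<in> D \<Longrightarrow> x \<in> ann_vec D \<Longrightarrow> stw p X x = 0"
  unfolding stw_def using D_mproj ann_vproj by (simp add: ann_vec_def)

lemma L_mem: "(A, z) \<in> L \<longleftrightarrow> z \<in> ann_vec D \<and> A - \<pi> z \<in> D"
proof
  assume "(A,z) \<in> L"
  then obtain X x where "A = X + \<pi> x" "z = x" "X \<in> D" "x \<in> ann_vec D" unfolding L_def by blast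
  thus "z \<in> ann_vec D \<and> A - \<pi> z \<in> D" by simp
next
  assume h: "z \<in> ann_vec D \<and> A - \<pi> z \<in> D"
  have "(A,z) = ((A - \<pi> z) + \<pi> z, z)" by simp
  thus "(A,z) \<in> L" unfolding L_def using h by blast
qed

lemma scomm_D:
  assumes "\<And>d e. mproj p d A ** mproj p e B \<in> D" "\<And>d e. mproj p e B ** mproj p d A \<in> D"
  shows "scomm p A B \<in> D"
  unfolding scomm_def using assms by (simp add: UNIV_bool D_add D_diff D_scale)


lemma half_neq: "(1/2::'a) \<noteq> 0" by simp

lemma iso: "L \<subseteq> eperp p L"
proof
  fix e assume e: "e \<in> L"
  obtain A x where ex: "e = (A, x)" by (cases e)
  have Ax: "x \<in> ann_vec D" "A - \<pi> x \<in> D" using e ex L_mem by auto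
  { fix f assume f: "f \<in> L"
    obtain B y where fy: "f = (B, y)" by (cases f)
    have By: "y \<in> ann_vec D" "B - \<pi> y \<in> D" using f fy L_mem by auto
    have "A *v y = (A - \<pi> x) *v y + \<pi> x *v y" by (simp add: matrix_vector_mult_diff_rdistrib)
    also have "(A - \<pi> x) *v y = 0" using Ax By by (simp add: ann_vec_def)
    finally have 1: "A *v y = \<pi> x *v y" by simp
    have "stw p B x = stw p (B - \<pi> y) x + stw p (\<pi> y) x" by (simp add: stw_add[symmetric])
    also have "stw p (B - \<pi> y) x = 0" using Ax By stw_D by simp
    finally have 2: "stw p B x = - (\<pi> x *v y)" by (simp add: stw_pi)
    have "epair p e f = 0" using 1 2 by (simp add: ex fy epair_eq) }
  thus "e \<in> eperp p L" by (simp add: eperp_def)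
qed

lemma maxi: "eperp p L \<subseteq> L"
proof
  fix e assume e: "e \<in> eperp p L"
  obtain B y where ey: "e = (B, y)" by (cases e)
  have P: "\<And>A x. (A, x) \<in> L \<Longrightarrow> epair p (B, y) (A, x) = 0" using e ey by (simp add: eperp_def)
  have yD: "y \<in> ann_vec D"
  proof -
    { fix X assume X: "X \<in> D"
      have "\<And>d. stw p (mproj p d X) y = 0"
      proof -
        fix d
        have "(mproj p d X, 0) \<in> L" using D_mproj[OF X] by (simp add: L_mem A_0)
        from P[OF this] show "stw p (mproj p d X) y = 0" by (simp add: epair_eq)
      qed
      hence "X *v y = 0" by (rule stw_proj_zero) }
    thus ?thesis by (simp add: ann_vec_def)
  qed
  have "B - \<pi> y \<in> D"
  proof -
    { fix w assume w: "w \<in> W"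
      have "(\<pi> w, w) \<in> L" using W_ann[OF w] by (simp add: L_mem D_0)
      from P[OF this] have "B *v w + stw p (\<pi> w) y = 0" by (simp add: epair_eq)
      hence "(B - \<pi> y) *v w = 0" by (simp add: stw_pi matrix_vector_mult_diff_rdistrib) }
    thus ?thesis by (simp add: memD)
  qed
  thus "e \<in> L" using yD ey L_mem by simp
qed

lemma mscale_diff: "mscale c (A - B) = mscale c A - mscale c (B::'a^'n^'n)"
  by (simp add: mscale_def vec_eq_iff algebra_simps)

lemma gsub: "gsubspace_E p L"
  unfolding gsubspace_E_def
proof (intro conjI allI impI)
  show "(0, 0) \<in> L" by (simp add: L_mem A_0 D_0)
next
  fix A x B y assume "(A, x) \<in> L" "(B, y) \<in> L"
  hence h: "x \<in> ann_vec D" "A - \<pi> x \<in> D" "y \<in> ann_vec D" "B - \<pi> y \<in> D" by (auto simp: L_mem)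
  have "A + B - \<pi> (x + y) = (A - \<pi> x) + (B - \<pi> y)" by (simp add: \<pi>_add algebra_simps)
  hence "A + B - \<pi> (x + y) \<in> D" using h by (simp only: D_add)
  thus "(A + B, x + y) \<in> L" using h by (simp add: L_mem A_add)
next
  fix c A x assume "(A, x) \<in> L"
  hence h: "x \<in> ann_vec D" "A - \<pi> x \<in> D" by (auto simp: L_mem)
  have "mscale c A - \<pi> (c *s x) = mscale c (A - \<pi> x)" by (simp add: \<pi>_scale mscale_diff)
  thus "(mscale c A, c *s x) \<in> L" using h by (simp add: L_mem A_scale D_scale)
next
  fix d A x assume "(A, x) \<in> L"
  hence h: "x \<in> ann_vec D" "A - \<pi> x \<in> D" by (auto simp: L_mem)
  have "mproj p d A - \<pi> (vproj p d x) = mproj p d (A - \<pi> x)" by (simp add: mproj_diff mproj_pi)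
  thus "(mproj p d A, vproj p d x) \<in> L" using h by (simp add: L_mem ann_vproj D_mproj)
qed

lemma lie: "lie_subsuperalg p D"
  unfolding lie_subsuperalg_def gsubspace_m_def
  by (auto simp: D_0 D_add D_scale D_mproj intro!: scomm_D D_mul)

lemma bracket_eq:
  assumes "(A, x) \<in> L" "(B, y) \<in> L"
  shows "ebracket p (A, x) (B, y) = (scomm p A B, \<pi> x *v y)"
proof -
  have Ax: "x \<in> ann_vec D" "A - \<pi> x \<in> D" "y \<in> ann_vec D" "B - \<pi> y \<in> D" using assms L_mem by auto
  have "A *v y = (A - \<pi> x) *v y + \<pi> x *v y" by (simp add: matrix_vector_mult_diff_rdistrib)
  also have "(A - \<pi> x) *v y = 0" using Ax by (simp add: ann_vec_def)
  finally have 1: "A *v y = \<pi> x *v y" by simp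
  have "stw p B x = stw p (B - \<pi> y) x + stw p (\<pi> y) x" by (simp add: stw_add[symmetric])
  also have "stw p (B - \<pi> y) x = 0" using Ax stw_D by simp
  finally have 2: "stw p B x = - (\<pi> x *v y)" by (simp add: stw_pi)
  have 3: "(1/2::'a) *s (\<pi> x *v y - - (\<pi> x *v y)) = \<pi> x *v y"
    by (simp add: vec_eq_iff)
  show ?thesis unfolding ebracket_eq 1 2 3 ..
qed

lemma XP:
  assumes c3: "\<forall>x\<in>ann_vec D. \<forall>y\<in>ann_vec D. \<pi> x *v y \<in> ann_vec D"
    and X: "X \<in> D" and z: "z \<in> ann_vec D"
  shows "X ** \<pi> z \<in> D"
proof -
  { fix w assume w: "w \<in> W"
    have "\<pi> z *v w \<in> ann_vec D" using c3 z W_ann[OF w] by blast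
    hence "(X ** \<pi> z) *v w = 0" using X by (simp add: matrix_vector_mul_assoc[symmetric] ann_vec_def) }
  thus ?thesis by (simp add: memD)
qed

end


theorem mainTheorem5:
  fixes p :: "'n::finite \<Rightarrow> bool"
    and W :: "('a::field_char_0^'n) set"
    and \<pi> :: "'a^'n \<Rightarrow> 'a^'n^'n"
    and D :: "('a^'n^'n) set"
    and L :: "('a, 'n) E set"
  assumes W_graded: "gsubspace_v p W"
    and \<pi>_add: "\<And>x y. \<pi> (x + y) = \<pi> x + \<pi> y"
    and \<pi>_scale: "\<And>c x. \<pi> (c *s x) = mscale c (\<pi> x)"
    and \<pi>_even: "\<And>d x. hvec p d x \<Longrightarrow> hmat p d (\<pi> x)"
    and \<pi>_skew: "\<And>d e x y. hvec p d x \<Longrightarrow> hvec p e y \<Longrightarrow>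
                   \<pi> x *v y = - (ssign d e *s (\<pi> y *v x))"
    and D_def: "D = ann_mat W"
    and L_def: "L = {(X + \<pi> x, x) | X x. X \<in> D \<and> x \<in> ann_vec D}"
  shows "dirac p L \<longleftrightarrow>
           lie_subsuperalg p D
         \<and> (\<forall>x\<in>ann_vec D. \<forall>y\<in>ann_vec D. \<pi> (\<pi> x *v y) - scomm p (\<pi> x) (\<pi> y) \<in> D)
         \<and> (\<forall>x\<in>ann_vec D. \<forall>y\<in>ann_vec D. \<pi> x *v y \<in> ann_vec D)"
proof -
  interpret dsetup p W \<pi> D L
    by (rule dsetup.intro[OF assms])
  have LL: "L = eperp p L" using iso maxi by blast
  have piL: "\<And>x. x \<in> ann_vec D \<Longrightarrow> (\<pi> x, x) \<in> L" by (simp add: L_mem D_0)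
  have fwd: "(\<forall>x\<in>ann_vec D. \<forall>y\<in>ann_vec D. \<pi> (\<pi> x *v y) - scomm p (\<pi> x) (\<pi> y) \<in> D)
         \<and> (\<forall>x\<in>ann_vec D. \<forall>y\<in>ann_vec D. \<pi> x *v y \<in> ann_vec D)"
    if cl: "\<forall>e\<in>L. \<forall>f\<in>L. ebracket p e f \<in> L"
  proof -
    { fix x y assume x: "x \<in> ann_vec D" and y: "y \<in> ann_vec D"
      have "ebracket p (\<pi> x, x) (\<pi> y, y) \<in> L" using cl piL x y by blast
      hence h: "\<pi> x *v y \<in> ann_vec D" "scomm p (\<pi> x) (\<pi> y) - \<pi> (\<pi> x *v y) \<in> D"
        using bracket_eq[OF piL[OF x] piL[OF y]] by (auto simp: L_mem)
      have "\<pi> (\<pi> x *v y) - scomm p (\<pi> x) (\<pi> y) = - (scomm p (\<pi> x) (\<pi> y) - \<pi> (\<pi> x *v y))" by simp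
      hence "\<pi> (\<pi> x *v y) - scomm p (\<pi> x) (\<pi> y) \<in> D" using D_minus[OF h(2)] by simp
      note this h(1) }
    thus ?thesis by blast
  qed
  have bwd: "\<forall>e\<in>L. \<forall>f\<in>L. ebracket p e f \<in> L"
    if c2: "\<forall>x\<in>ann_vec D. \<forall>y\<in>ann_vec D. \<pi> (\<pi> x *v y) - scomm p (\<pi> x) (\<pi> y) \<in> D"
    and c3: "\<forall>x\<in>ann_vec D. \<forall>y\<in>ann_vec D. \<pi> x *v y \<in> ann_vec D"
  proof (intro ballI)
    fix e f assume e: "e \<in> L" and f: "f \<in> L"
    obtain A x where ex: "e = (A, x)" by (cases e)
    obtain B y where fy: "f = (B, y)" by (cases f)
    define X where "X = A - \<pi> x"
    define Y where "Y = B - \<pi> y"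
    have h: "x \<in> ann_vec D" "X \<in> D" "y \<in> ann_vec D" "Y \<in> D"
      using e f ex fy L_mem X_def Y_def by auto
    have A: "A = X + \<pi> x" and B: "B = Y + \<pi> y" by (simp_all add: X_def Y_def)
    have s1: "scomm p X Y \<in> D"
      using h by (intro scomm_D D_mul D_mproj)
    have s2: "scomm p X (\<pi> y) \<in> D"
    proof (rule scomm_D)
      fix d e
      show "mproj p d X ** mproj p e (\<pi> y) \<in> D" unfolding mproj_pi
        by (rule XP[OF c3 D_mproj[OF h(2)] ann_vproj[OF h(3)]])
    next
      fix d e
      show "mproj p e (\<pi> y) ** mproj p d X \<in> D" by (rule D_mul[OF D_mproj[OF h(2)]])
    qed
    have s3: "scomm p (\<pi> x) Y \<in> D"
    proof (rule scomm_D)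
      fix d e
      show "mproj p d (\<pi> x) ** mproj p e Y \<in> D" by (rule D_mul[OF D_mproj[OF h(4)]])
    next
      fix d e
      show "mproj p e Y ** mproj p d (\<pi> x) \<in> D" unfolding mproj_pi
        by (rule XP[OF c3 D_mproj[OF h(4)] ann_vproj[OF h(1)]])
    qed
    have s4: "scomm p (\<pi> x) (\<pi> y) - \<pi> (\<pi> x *v y) \<in> D"
      using D_minus[OF c2[rule_format, OF h(1) h(3)]] by simp
    have "scomm p A B - \<pi> (\<pi> x *v y)
        = scomm p X Y + scomm p X (\<pi> y) + scomm p (\<pi> x) Y + (scomm p (\<pi> x) (\<pi> y) - \<pi> (\<pi> x *v y))"
      unfolding A B by (simp add: scomm_add_l scomm_add_r algebra_simps)
    hence "scomm p A B - \<pi> (\<pi> x *v y) \<in> D" using s1 s2 s3 s4 by (simp only: D_add)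
    moreover have "\<pi> x *v y \<in> ann_vec D" using c3 h by blast
    ultimately show "ebracket p e f \<in> L"
      using bracket_eq e f ex fy by (simp add: L_mem)
  qed
  show ?thesis unfolding dirac_def using gsub LL lie fwd bwd by blast
qed

end
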